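(* Any DIR compatible dynamic pricing process $(\tau,T)$ with $P(\tau<\infty)<1$ is not optimal.
   Context: Standing assumptions: $\theta>0$, $\lambda>0$; $w_+,w_-:[0,1]\to[0,1]$ strictly increasing, thrice differentiable, $w_\pm(0)=0$, $w_\pm(1)=1$, $w_\pm'(0)>1$, $w_\pm'(1)>1$, $w_\pm'''>0$. A cumulative payment function is $T:\mathbb{R}^+\to\mathbb{R}^+$ of the form $T(t)=\int_0^tf(s)ds+\sum_i1_{t_i<t}T_i$, with $f\ge0$ integrable and $(t_i),(T_i)$ countable sequences of nonnegative numbers, $t_i$ increasing. A stopping time is a random variable $\tau\in[0,\infty]$ whose CDF is the sum of a nondecreasing nonnegative absolutely continuous function and a nondecreasing nonnegative jump function. A dynamic pricing process $(\tau,T)$ is DIR compatible if for every $s$ with $P(\tau>s)>0$, \[\theta\,w_+(P(\tau<\infty\mid\tau>s))-\lambda\int_0^\infty w_-\big(P(T(\tau)-T(s)>y\mid\tau>s)\big)dy\ge0.\] Its revenue is $\int_0^\infty P(T(\tau)>y)dy$; it is optimal if it maximizes revenue among DIR compatible processes. *)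

theory Defs
  imports "HOL-Probability.Probability"
begin

definition weighting :: "(real \<Rightarrow> real) \<Rightarrow> bool" where
  "weighting w \<longleftrightarrow>
     strict_mono_on {0..1} w \<and> (\<forall>x\<in>{0..1}. w x \<in> {0..1}) \<and> w 0 = 0 \<and> w 1 = 1 \<and>
     (\<exists>w1 w2 w3. (\<forall>x\<in>{0..1}.
          (w has_real_derivative w1 x) (at x within {0..1}) \<and>
          (w1 has_real_derivative w2 x) (at x within {0..1}) \<and>
          (w2 has_real_derivative w3 x) (at x within {0..1}) \<and> w3 x > 0)
        \<and> w1 0 > 1 \<and> w1 1 > 1)"

definition payment_fn :: "(real \<Rightarrow> real) \<Rightarrow> bool" where
  "payment_fn T \<longleftrightarrow>
     (\<exists>(f::real \<Rightarrow> real) (ts::nat \<Rightarrow> real) (Ts::nat \<Rightarrow> real).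
        (\<forall>s. f s \<ge> 0) \<and> set_integrable lborel {0..} f \<and>
        (\<forall>i. ts i \<ge> 0 \<and> Ts i \<ge> 0) \<and> mono ts \<and>
        (\<forall>t\<ge>0. summable (\<lambda>i. if ts i < t then Ts i else 0) \<and>
           T t = (LBINT s:{0..t}. f s) + (\<Sum>i. if ts i < t then Ts i else 0)))"

definition T_at :: "(real \<Rightarrow> real) \<Rightarrow> ennreal \<Rightarrow> ennreal" where
  "T_at T x = (if x = \<infinity> then (SUP t\<in>{0..}. ennreal (T t)) else ennreal (T (enn2real x)))"

definition abs_continuous_on :: "real set \<Rightarrow> (real \<Rightarrow> real) \<Rightarrow> bool" where
  "abs_continuous_on S F \<longleftrightarrow>
     (\<forall>\<epsilon>>0. \<exists>\<delta>>0. \<forall>(n::nat) (a::nat \<Rightarrow> real) (b::nat \<Rightarrow> real).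
        (\<forall>i<n. a i \<le> b i \<and> {a i..b i} \<subseteq> S) \<and>
        (\<forall>i<n. \<forall>j<n. i \<noteq> j \<longrightarrow> b i \<le> a j \<or> b j \<le> a i) \<and>
        (\<Sum>i<n. b i - a i) < \<delta> \<longrightarrow> (\<Sum>i<n. \<bar>F (b i) - F (a i)\<bar>) < \<epsilon>)"

definition jump_fn :: "(real \<Rightarrow> real) \<Rightarrow> bool" where
  "jump_fn J \<longleftrightarrow>
     (\<exists>(a::nat \<Rightarrow> real) (c::nat \<Rightarrow> real). (\<forall>i. c i \<ge> 0) \<and>
        (\<forall>t\<ge>0. summable (\<lambda>i. if a i \<le> t then c i else 0) \<and>
                J t = (\<Sum>i. if a i \<le> t then c i else 0)))"

text \<open>A stopping time tau in [0,\<infinity>] is represented by its law mu, a probability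
  measure on ennreal = [0,\<infinity>]; its CDF on [0,\<infinity>) is absolutely continuous part + jump part.\<close>
definition stopping_law :: "ennreal measure \<Rightarrow> bool" where
  "stopping_law \<mu> \<longleftrightarrow> prob_space \<mu> \<and> sets \<mu> = sets borel \<and>
     (\<exists>A J. mono_on {0..} A \<and> (\<forall>t\<ge>0. A t \<ge> 0) \<and> abs_continuous_on {0..} A \<and>
            mono_on {0..} J \<and> (\<forall>t\<ge>0. J t \<ge> 0) \<and> jump_fn J \<and>
            (\<forall>t\<ge>0. measure \<mu> {..ennreal t} = A t + J t))"

definition cond_prob :: "ennreal measure \<Rightarrow> ennreal set \<Rightarrow> real \<Rightarrow> real" where
  "cond_prob \<mu> E s = measure \<mu> (E \<inter> {ennreal s<..}) / measure \<mu> {ennreal s<..}"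

definition DIR_compatible ::
  "real \<Rightarrow> real \<Rightarrow> (real \<Rightarrow> real) \<Rightarrow> (real \<Rightarrow> real) \<Rightarrow> ennreal measure \<Rightarrow> (real \<Rightarrow> real) \<Rightarrow> bool" where
  "DIR_compatible \<theta> lam wp wm \<mu> T \<longleftrightarrow> stopping_law \<mu> \<and> payment_fn T \<and>
     (\<forall>s\<ge>0. measure \<mu> {ennreal s<..} > 0 \<longrightarrow>
        ennreal lam * (\<integral>\<^sup>+ y\<in>{0..}. ennreal (wm (cond_prob \<mu> {x. T_at T x - ennreal (T s) > ennreal y} s)) \<partial>lborel)
        \<le> ennreal (\<theta> * wp (cond_prob \<mu> {x. x < \<infinity>} s)))"

definition revenue :: "ennreal measure \<Rightarrow> (real \<Rightarrow> real) \<Rightarrow> ennreal" where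
  "revenue \<mu> T = (\<integral>\<^sup>+ y\<in>{0..}. emeasure \<mu> {x. T_at T x > ennreal y} \<partial>lborel)"

definition optimal ::
  "real \<Rightarrow> real \<Rightarrow> (real \<Rightarrow> real) \<Rightarrow> (real \<Rightarrow> real) \<Rightarrow> ennreal measure \<Rightarrow> (real \<Rightarrow> real) \<Rightarrow> bool" where
  "optimal \<theta> lam wp wm \<mu> T \<longleftrightarrow> DIR_compatible \<theta> lam wp wm \<mu> T \<and>
     (\<forall>\<mu>' T'. DIR_compatible \<theta> lam wp wm \<mu>' T' \<longrightarrow> revenue \<mu>' T' \<le> revenue \<mu> T)"

end

theory Submission
  imports Defs
begin


lemma pay_props:
  assumes "payment_fn T"
  shows "T 0 = 0" and "\<And>t. t \<ge> 0 \<Longrightarrow> T t \<ge> 0"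
    and "\<And>s t. 0 \<le> s \<Longrightarrow> s \<le> t \<Longrightarrow> T s \<le> T t"
proof -
  obtain f :: "real \<Rightarrow> real" and ts Ts :: "nat \<Rightarrow> real" where f0: "\<forall>s. f s \<ge> 0" and fi: "set_integrable lborel {0..} f"
    and tsp: "\<forall>i. ts i \<ge> 0 \<and> Ts i \<ge> 0" and 
    Tt: "\<forall>t\<ge>0. summable (\<lambda>i. if ts i < t then Ts i else 0) \<and>
           T t = (LBINT s:{0..t}. f s) + (\<Sum>i. if ts i < t then Ts i else 0)"
    using assms unfolding payment_fn_def by blast
  have "(LBINT s:{0..0::real}. f s) = 0"
    unfolding set_lebesgue_integral_def
    by (rule integral_eq_zero_AE) (use AE_lborel_singleton[of 0] in \<open>auto elim!: eventually_mono\<close>)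
  moreover have "(\<Sum>i. if ts i < 0 then Ts i else 0) = 0"
  proof -
    have "(\<lambda>i. if ts i < 0 then Ts i else 0) = (\<lambda>i. 0::real)" using tsp by (intro ext) (meson leD)
    then show ?thesis by simp
  qed
  ultimately show "T 0 = 0" using Tt by simp
  show "T t \<ge> 0" if "t \<ge> 0" for t
  proof -
    have "(LBINT s:{0..t}. f s) \<ge> 0" using f0 unfolding set_lebesgue_integral_def by (intro integral_nonneg_AE) auto
    moreover have "(\<Sum>i. if ts i < t then Ts i else 0) \<ge> 0"
      using tsp Tt that by (intro suminf_nonneg) auto
    ultimately show ?thesis using Tt that by simp
  qed
  show "T s \<le> T t" if "0 \<le> s" "s \<le> t" for s t
  proof -
    have i1: "set_integrable lborel {0..s} f" by (rule set_integrable_subset[OF fi]) auto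
    have i2: "set_integrable lborel {0..t} f" by (rule set_integrable_subset[OF fi]) auto
    have "(LBINT x:{0..s}. f x) \<le> (LBINT x:{0..t}. f x)"
      unfolding set_lebesgue_integral_def
      apply (rule integral_mono)
      using i1 i2 f0 that unfolding set_integrable_def
      by (auto simp: indicator_def)
    moreover have "(\<Sum>i. if ts i < s then Ts i else 0) \<le> (\<Sum>i. if ts i < t then Ts i else 0)"
      apply (rule suminf_le)
      using Tt that tsp by auto
    ultimately show ?thesis using Tt that by simp
  qed
qed



lemma T_at_meas:
  assumes "payment_fn T" shows "T_at T \<in> borel_measurable borel"
proof -
  have m: "mono (\<lambda>t. T (max 0 t))"
    by (rule monoI) (auto intro!: pay_props(3)[OF assms])
  have mm: "(\<lambda>t. T (max 0 t)) \<in> borel_measurable borel" by (rule borel_measurable_mono[OF m])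
  have eq: "T_at T = (\<lambda>x. if x = \<infinity> then (SUP t\<in>{0..}. ennreal (T t)) else ennreal (T (max 0 (enn2real x))))"
    by (auto simp: T_at_def fun_eq_iff)
  show ?thesis unfolding eq
    using mm by measurable
qed

lemma T_at_le_sup: "T_at T x \<le> T_at T \<infinity>"
  unfolding T_at_def by (auto intro!: SUP_upper)

lemma weighting_props:
  assumes "weighting w"
  shows "\<And>x y. 0\<le>x \<Longrightarrow> x\<le>y \<Longrightarrow> y\<le>1 \<Longrightarrow> w x \<le> w y"
    and "\<And>x y. 0\<le>x \<Longrightarrow> x<y \<Longrightarrow> y\<le>1 \<Longrightarrow> w x < w y"
    and "\<And>x. 0 \<le> x \<Longrightarrow> x \<le> 1 \<Longrightarrow> 0 \<le> w x \<and> w x \<le> 1"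
    and "w 0 = 0" and "w 1 = 1"
    and "\<exists>c>0. \<forall>p. 0 \<le> p \<longrightarrow> p \<le> 1 \<longrightarrow> c * p \<le> w p"
proof -
  have sm: "strict_mono_on {0..1} w" and rg: "\<forall>x\<in>{0..1}. w x \<in> {0..1}" and w0: "w 0 = 0" and w1: "w 1 = 1"
    using assms unfolding weighting_def by auto
  obtain w1 where d0: "(w has_real_derivative w1 0) (at 0 within {0..1})" and g: "w1 0 > 1"
    using assms unfolding weighting_def by force
  show le: "w x \<le> w y" if "0\<le>x" "x\<le>y" "y\<le>1" for x y
    using strict_mono_on_leD[OF sm] that by auto
  show lt: "w x < w y" if "0\<le>x" "x<y" "y\<le>1" for x y
    using strict_mono_onD[OF sm] that by auto
  show "0 \<le> w x \<and> w x \<le> 1" if "0 \<le> x" "x \<le> 1" for x using rg that by auto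
  show "w 0 = 0" "w 1 = 1" by fact+
  have "((\<lambda>y. (w y - w 0) / (y - 0)) \<longlongrightarrow> w1 0) (at 0 within {0..1})"
    using d0 by (simp add: has_field_derivative_iff)
  then have "eventually (\<lambda>y. (w y - w 0) / (y - 0) > 1) (at 0 within {0..1})"
    using g by (rule order_tendstoD)
  then obtain d where d: "d > 0" and dP: "\<And>y. y \<in> {0..1} \<Longrightarrow> y \<noteq> 0 \<Longrightarrow> dist y 0 < d \<Longrightarrow> (w y - w 0) / (y - 0) > 1"
    unfolding eventually_at by blast
  define e where "e = min (d/2) 1"
  have e: "e > 0" "e \<le> 1" "e < d" using d by (auto simp: e_def)
  have small: "w p > p" if "0 < p" "p \<le> e" for p
  proof -
    have "(w p - w 0) / (p - 0) > 1" using dP[of p] that e by auto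
    then show ?thesis using that w0 by (simp add: field_simps)
  qed
  show "\<exists>c>0. \<forall>p. 0 \<le> p \<longrightarrow> p \<le> 1 \<longrightarrow> c * p \<le> w p"
  proof (intro exI[of _ e] conjI allI impI)
    fix p :: real assume p: "0 \<le> p" "p \<le> 1"
    show "e * p \<le> w p"
    proof (cases "p \<le> e")
      case True
      show ?thesis
      proof (cases "p = 0")
        case True then show ?thesis using w0 by simp
      next
        case False
        then have "w p > p" using small p True by auto
        moreover have "e * p \<le> p" using e p by (simp add: mult_left_le_one_le)
        ultimately show ?thesis by simp
      qed
    next
      case False
      have "w e > e" using small e by auto
      moreover have "w e \<le> w p" using le[of e p] False e p by auto
      moreover have "e * p \<le> e" using e p by (simp add: mult_right_le_one_le)
      ultimately show ?thesis by simp
    qed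
  qed (use e in auto)
qed



lemma pay_shift:
  assumes "payment_fn T" "\<epsilon> \<ge> 0"
  shows "payment_fn (\<lambda>t. T t + (if 0 < t then \<epsilon> else 0))"
proof -
  obtain f :: "real \<Rightarrow> real" and ts Ts :: "nat \<Rightarrow> real" where f0: "\<forall>s. f s \<ge> 0" and fi: "set_integrable lborel {0..} f"
    and tsp: "\<forall>i. ts i \<ge> 0 \<and> Ts i \<ge> 0" and mts: "mono ts" and
    Tt: "\<forall>t\<ge>0. summable (\<lambda>i. if ts i < t then Ts i else 0) \<and>
           T t = (LBINT s:{0..t}. f s) + (\<Sum>i. if ts i < t then Ts i else 0)"
    using assms unfolding payment_fn_def by blast
  define ts' where "ts' i = (case i of 0 \<Rightarrow> 0 | Suc j \<Rightarrow> ts j)" for i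
  define Ts' where "Ts' i = (case i of 0 \<Rightarrow> \<epsilon> | Suc j \<Rightarrow> Ts j)" for i
  have p1: "\<forall>i. ts' i \<ge> 0 \<and> Ts' i \<ge> 0" using tsp assms(2)
    by (auto simp: ts'_def Ts'_def split: nat.splits)
  have p2: "mono ts'"
  proof (rule monoI)
    fix i j :: nat assume "i \<le> j"
    then show "ts' i \<le> ts' j" using tsp mts
      by (cases i; cases j) (auto simp: ts'_def mono_def)
  qed
  have p3: "summable (\<lambda>i. if ts' i < t then Ts' i else 0) \<and>
           T t + (if 0 < t then \<epsilon> else 0) = (LBINT s:{0..t}. f s) + (\<Sum>i. if ts' i < t then Ts' i else 0)"
    if "t \<ge> 0" for t
  proof -
    let ?h = "\<lambda>i. if ts' i < t then Ts' i else 0"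
    have e: "(\<lambda>n. ?h (Suc n)) = (\<lambda>i. if ts i < t then Ts i else 0)"
      by (auto simp: ts'_def Ts'_def)
    have s: "summable ?h" using Tt that e summable_Suc_iff[of ?h] by simp
    have "(\<Sum>n. ?h (Suc n)) = suminf ?h - ?h 0" by (rule suminf_split_head[OF s])
    then have "suminf ?h = (if 0 < t then \<epsilon> else 0) + (\<Sum>i. if ts i < t then Ts i else 0)"
      unfolding e by (simp add: ts'_def Ts'_def)
    then show ?thesis using s Tt that by simp
  qed
  show ?thesis unfolding payment_fn_def
    using f0 fi p1 p2 p3 by blast
qed

lemma abs_cont_trunc:
  assumes Aac: "abs_continuous_on {0..} A" and m: "m > 0"
  shows "abs_continuous_on {0..} (\<lambda>t. A (min t m))"
  unfolding abs_continuous_on_def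
proof (intro allI impI)
  fix e :: real assume "e > 0"
  from Aac[unfolded abs_continuous_on_def, rule_format, OF \<open>e > 0\<close>]
  obtain \<delta> where \<delta>: "\<delta> > 0" and H: "\<forall>(n::nat) a b. (\<forall>i<n. a i \<le> b i \<and> {a i..b i} \<subseteq> {0..}) \<and>
        (\<forall>i<n. \<forall>j<n. i \<noteq> j \<longrightarrow> b i \<le> a j \<or> b j \<le> a i) \<and>
        (\<Sum>i<n. b i - a i) < \<delta> \<longrightarrow> (\<Sum>i<n. \<bar>A (b i) - A (a i)\<bar>) < e"
    by (elim exE conjE) (rule that)
  show "\<exists>\<delta>>0. \<forall>(n::nat) a b. (\<forall>i<n. a i \<le> b i \<and> {a i..b i} \<subseteq> {0..}) \<and>
        (\<forall>i<n. \<forall>j<n. i \<noteq> j \<longrightarrow> b i \<le> a j \<or> b j \<le> a i) \<and>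
        (\<Sum>i<n. b i - a i) < \<delta> \<longrightarrow> (\<Sum>i<n. \<bar>A (min (b i) m) - A (min (a i) m)\<bar>) < e"
  proof (intro exI[of _ \<delta>] conjI allI impI)
    fix n :: nat and a b :: "nat \<Rightarrow> real"
    assume as: "(\<forall>i<n. a i \<le> b i \<and> {a i..b i} \<subseteq> {0..}) \<and>
      (\<forall>i<n. \<forall>j<n. i \<noteq> j \<longrightarrow> b i \<le> a j \<or> b j \<le> a i) \<and> (\<Sum>i<n. b i - a i) < \<delta>"
    let ?a = "\<lambda>i. min (a i) m" and ?b = "\<lambda>i. min (b i) m"
    have h1: "\<forall>i<n. ?a i \<le> ?b i \<and> {?a i..?b i} \<subseteq> {0..}"
    proof (intro allI impI conjI)
      fix i assume i: "i < n"
      then have ab: "a i \<le> b i" "{a i..b i} \<subseteq> {0..}" using as by auto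
      then have "a i \<ge> 0" by auto
      then show "?a i \<le> ?b i" "{?a i..?b i} \<subseteq> {0..}" using ab(1) m by auto
    qed
    have h2: "\<forall>i<n. \<forall>j<n. i \<noteq> j \<longrightarrow> ?b i \<le> ?a j \<or> ?b j \<le> ?a i"
    proof (intro allI impI)
      fix i j assume "i < n" "j < n" "i \<noteq> j"
      then have "b i \<le> a j \<or> b j \<le> a i" using as by blast
      then show "?b i \<le> ?a j \<or> ?b j \<le> ?a i" by linarith
    qed
    have "(\<Sum>i<n. ?b i - ?a i) \<le> (\<Sum>i<n. b i - a i)"
    proof (rule sum_mono)
      fix i assume "i \<in> {..<n}"
      then have "a i \<le> b i" using as by auto
      then show "?b i - ?a i \<le> b i - a i" by linarith
    qed
    then have h3: "(\<Sum>i<n. ?b i - ?a i) < \<delta>" using as by linarith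
    have "(\<Sum>i<n. \<bar>A (?b i) - A (?a i)\<bar>) < e"
      by (rule H[rule_format]) (use h1 h2 h3 in blast)
    then show "(\<Sum>i<n. \<bar>A (min (b i) m) - A (min (a i) m)\<bar>) < e" .
  qed (use \<delta> in auto)
qed

lemma min_meas[measurable]: "(\<lambda>x::ennreal. min x c) \<in> borel_measurable borel"
  by measurable

lemma stop_trunc:
  assumes "stopping_law \<mu>" "m > 0"
  shows "stopping_law (distr \<mu> borel (\<lambda>x. min x (ennreal m)))"
proof -
  have ps: "prob_space \<mu>" and se: "sets \<mu> = sets borel" using assms unfolding stopping_law_def by auto
  obtain A J where Am: "mono_on {0..} A" and A0: "\<forall>t\<ge>0. A t \<ge> 0" and Aac: "abs_continuous_on {0..} A"
    and Jm: "mono_on {0..} J" and J0: "\<forall>t\<ge>0. J t \<ge> 0" and Jj: "jump_fn J"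
    and cdf: "\<forall>t\<ge>0. measure \<mu> {..ennreal t} = A t + J t"
    using assms unfolding stopping_law_def by blast
  interpret prob_space \<mu> by fact
  have sp: "space \<mu> = UNIV" using sets_eq_imp_space_eq[OF se] by simp
  let ?g = "\<lambda>x::ennreal. min x (ennreal m)"
  have gm: "?g \<in> measurable \<mu> borel"
    using measurable_cong_sets[OF se refl] min_meas by blast
  define d where "d = 1 - measure \<mu> {..ennreal m}"
  have d0: "d \<ge> 0" unfolding d_def by simp
  define A' where "A' t = A (min t m)" for t
  define J' where "J' t = J (min t m) + (if m \<le> t then d else 0)" for t
  have c1: "prob_space (distr \<mu> borel ?g)" by (rule prob_space_distr[OF gm])
  have c2: "sets (distr \<mu> borel ?g) = sets borel" by simp
  have c3: "mono_on {0..} A'" unfolding A'_def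
    by (rule mono_onI) (use assms(2) in \<open>auto intro!: mono_onD[OF Am]\<close>)
  have c4: "\<forall>t\<ge>0. A' t \<ge> 0" using A0 assms(2) by (auto simp: A'_def)
  have c5: "abs_continuous_on {0..} A'"
    unfolding A'_def[abs_def] by (rule abs_cont_trunc[OF Aac assms(2)])
  have c6: "mono_on {0..} J'" unfolding J'_def
  proof (rule mono_onI)
    fix r s :: real assume "r \<in> {0..}" "s \<in> {0..}" "r \<le> s"
    then have "J (min r m) \<le> J (min s m)" using assms(2) by (auto intro!: mono_onD[OF Jm])
    then show "J (min r m) + (if m \<le> r then d else 0) \<le> J (min s m) + (if m \<le> s then d else 0)"
      using d0 \<open>r \<le> s\<close> by auto
  qed
  have c7: "\<forall>t\<ge>0. J' t \<ge> 0" using J0 d0 assms(2) by (auto simp: J'_def)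
  have c8: "jump_fn J'"
  proof -
    obtain a c :: "nat \<Rightarrow> real" where c0: "\<forall>i. c i \<ge> 0" and
      Ja: "\<forall>t\<ge>0. summable (\<lambda>i. if a i \<le> t then c i else 0) \<and> J t = (\<Sum>i. if a i \<le> t then c i else 0)"
      using Jj unfolding jump_fn_def by blast
    define a' where "a' i = (case i of 0 \<Rightarrow> m | Suc j \<Rightarrow> a j)" for i
    define c' where "c' i = (case i of 0 \<Rightarrow> d | Suc j \<Rightarrow> (if a j \<le> m then c j else 0))" for i
    have "c' i \<ge> 0" for i using c0 d0 by (auto simp: c'_def split: nat.splits)
    moreover have "summable (\<lambda>i. if a' i \<le> t then c' i else 0) \<and> J' t = (\<Sum>i. if a' i \<le> t then c' i else 0)"
      if t: "t \<ge> 0" for t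
    proof -
      let ?h = "\<lambda>i. if a' i \<le> t then c' i else 0"
      have e: "(\<lambda>n. ?h (Suc n)) = (\<lambda>i. if a i \<le> min t m then c i else 0)"
        by (auto simp: a'_def c'_def)
      have mt: "min t m \<ge> 0" using t assms(2) by simp
      have s0: "summable (\<lambda>i. if a i \<le> min t m then c i else 0)" using Ja mt by blast
      have "summable (\<lambda>n. ?h (Suc n))" unfolding e by (rule s0)
      then have s: "summable ?h" using summable_Suc_iff[of ?h] by blast
      have "(\<Sum>n. ?h (Suc n)) = suminf ?h - ?h 0" by (rule suminf_split_head[OF s])
      then have "suminf ?h = (if m \<le> t then d else 0) + (\<Sum>i. if a i \<le> min t m then c i else 0)"
        unfolding e by (simp add: a'_def c'_def)
      then show ?thesis using s Ja mt by (simp add: J'_def)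
    qed
    ultimately show ?thesis unfolding jump_fn_def
      by (intro exI[of _ a'] exI[of _ c'] conjI allI impI) auto
  qed
  have c9: "\<forall>t\<ge>0. measure (distr \<mu> borel ?g) {..ennreal t} = A' t + J' t"
  proof (intro allI impI)
    fix t :: real assume t: "t \<ge> 0"
    have "measure (distr \<mu> borel ?g) {..ennreal t} = measure \<mu> (?g -` {..ennreal t} \<inter> space \<mu>)"
      by (rule measure_distr[OF gm]) simp
    also have "\<dots> = A' t + J' t"
    proof (cases "m \<le> t")
      case True
      have "\<forall>x. min x (ennreal m) \<le> ennreal t" using True by (metis min.coboundedI2 ennreal_leI)
      then have "?g -` {..ennreal t} \<inter> space \<mu> = space \<mu>" by auto
      then have "measure \<mu> (?g -` {..ennreal t} \<inter> space \<mu>) = 1" by (simp add: prob_space)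
      also have "\<dots> = A' t + J' t" using True cdf assms(2) by (simp add: A'_def J'_def d_def)
      finally show ?thesis .
    next
      case False
      then have "\<not> ennreal m \<le> ennreal t" using t assms(2) by simp
      then have "?g -` {..ennreal t} \<inter> space \<mu> = {..ennreal t}"
        by (auto simp: min_le_iff_disj sp)
      then show ?thesis using False cdf t by (simp add: A'_def J'_def)
    qed
    finally show "measure (distr \<mu> borel ?g) {..ennreal t} = A' t + J' t" .
  qed
  show ?thesis unfolding stopping_law_def
    by (intro conjI exI[of _ A'] exI[of _ J']; fact)
qed



lemma antimono_ennreal_meas:
  fixes h :: "real \<Rightarrow> real"
  assumes "\<And>x y. x \<le> y \<Longrightarrow> h y \<le> h x"
  shows "(\<lambda>y. ennreal (h y)) \<in> borel_measurable borel"
proof -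
  have "mono (\<lambda>y. - h y)" using assms by (auto intro!: monoI)
  then have "(\<lambda>y. - h y) \<in> borel_measurable borel" by (rule borel_measurable_mono)
  then have "(\<lambda>y. - (- h y)) \<in> borel_measurable borel" by (rule borel_measurable_uminus)
  then have [measurable]: "h \<in> borel_measurable borel" by simp
  show ?thesis by measurable
qed

lemma cp_range:
  assumes "finite_measure \<mu>" "sets \<mu> = sets borel" "measure \<mu> {ennreal s<..} > 0"
  shows "0 \<le> cond_prob \<mu> E s \<and> cond_prob \<mu> E s \<le> 1"
proof -
  interpret finite_measure \<mu> by fact
  have "{ennreal s<..} \<in> sets \<mu>" using assms(2) by simp
  then have "measure \<mu> (E \<inter> {ennreal s<..}) \<le> measure \<mu> {ennreal s<..}"
    by (intro finite_measure_mono) auto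
  then show ?thesis using assms(3) unfolding cond_prob_def by (simp add: divide_le_eq_1)
qed

lemma cp_mono:
  assumes "finite_measure \<mu>" "sets \<mu> = sets borel" "E \<subseteq> F" "F \<in> sets borel"
  shows "cond_prob \<mu> E s \<le> cond_prob \<mu> F s"
proof -
  interpret finite_measure \<mu> by fact
  have "F \<inter> {ennreal s<..} \<in> sets \<mu>" using assms by simp
  then have "measure \<mu> (E \<inter> {ennreal s<..}) \<le> measure \<mu> (F \<inter> {ennreal s<..})"
    using assms(3) by (intro finite_measure_mono) auto
  then show ?thesis unfolding cond_prob_def by (simp add: divide_right_mono)
qed

lemma W_meas:
  assumes "finite_measure \<mu>" "sets \<mu> = sets borel" "X \<in> borel_measurable borel"
    "measure \<mu> {ennreal s<..} > 0" "weighting w"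
  shows "(\<lambda>y. ennreal (w (cond_prob \<mu> {x. X x - a > ennreal y} s))) \<in> borel_measurable borel"
proof (rule antimono_ennreal_meas)
  fix y y' :: real assume "y \<le> y'"
  have [measurable]: "X \<in> borel_measurable borel" by fact
  have "{x. X x - a > ennreal y} \<in> sets borel" by measurable
  moreover have "{x. X x - a > ennreal y'} \<subseteq> {x. X x - a > ennreal y}"
    using \<open>y \<le> y'\<close> by (auto intro: le_less_trans[OF ennreal_leI])
  ultimately have "cond_prob \<mu> {x. X x - a > ennreal y'} s \<le> cond_prob \<mu> {x. X x - a > ennreal y} s"
    using cp_mono[OF assms(1,2)] by blast
  then show "w (cond_prob \<mu> {x. X x - a > ennreal y'} s) \<le> w (cond_prob \<mu> {x. X x - a > ennreal y} s)"
    using cp_range[OF assms(1,2,4)] weighting_props(1)[OF assms(5)] by blast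
qed

lemma ennr_diff_gt1:
  assumes "0 \<le> b" "0 \<le> z" "ennreal (z + b) < X"
  shows "ennreal z < X - ennreal b"
proof -
  have e: "ennreal z < X - ennreal b \<longleftrightarrow> ennreal z + ennreal b < X" by (rule less_diff_eq_ennreal) simp
  have "ennreal (z + b) = ennreal z + ennreal b" using assms(1,2) by simp
  then show ?thesis using e assms(3) by argo
qed

lemma ennr_diff_gt2:
  assumes "0 \<le> b" "0 \<le> z" "ennreal z < X - ennreal b"
  shows "ennreal (z + b) < X"
proof -
  have e: "ennreal z < X - ennreal b \<longleftrightarrow> ennreal z + ennreal b < X" by (rule less_diff_eq_ennreal) simp
  have "ennreal (z + b) = ennreal z + ennreal b" using assms(1,2) by simp
  then show ?thesis using e assms(3) by argo
qed

lemma lborel_Ici_inf: "emeasure lborel {0::real..} = \<infinity>"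
proof (rule ccontr)
  assume "emeasure lborel {0::real..} \<noteq> \<infinity>"
  then obtain r where r: "emeasure lborel {0::real..} = ennreal r" "r \<ge> 0"
    by (metis ennreal_cases infinity_ennreal_def)
  have "emeasure lborel {0..r+1} \<le> emeasure lborel {0::real..}"
    by (rule emeasure_mono) auto
  then have "ennreal (r + 1) \<le> ennreal r" using r by simp
  then show False using r by simp
qed



theorem lemma2:
  fixes \<theta> lam :: real and wp wm :: "real \<Rightarrow> real"
    and \<mu> :: "ennreal measure" and T :: "real \<Rightarrow> real"
  assumes "\<theta> > 0" and "lam > 0" and "weighting wp" and "weighting wm"
    and "DIR_compatible \<theta> lam wp wm \<mu> T"
    and "measure \<mu> {x. x < \<infinity>} < 1"
  shows "\<not> optimal \<theta> lam wp wm \<mu> T"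
proof
  note th = assms(1) and la = assms(2) and wpw = assms(3) and wmw = assms(4)
    and dir = assms(5) and fin = assms(6)
  assume opt: "optimal \<theta> lam wp wm \<mu> T"
  have sl: "stopping_law \<mu>" and pT: "payment_fn T" and
    D: "\<And>s. s \<ge> 0 \<Longrightarrow> measure \<mu> {ennreal s<..} > 0 \<Longrightarrow> ennreal lam * (\<integral>\<^sup>+ y\<in>{0..}. ennreal (wm (cond_prob \<mu> {x. T_at T x - ennreal (T s) > ennreal y} s)) \<partial>lborel)
        \<le> ennreal (\<theta> * wp (cond_prob \<mu> {x. x < \<infinity>} s))"
    using dir unfolding DIR_compatible_def by auto
  have ps: "prob_space \<mu>" and se: "sets \<mu> = sets borel" using sl unfolding stopping_law_def by auto
  interpret prob_space \<mu> by fact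
  have fm: "finite_measure \<mu>" using ps unfolding prob_space_def by blast
  have sp: "space \<mu> = UNIV" using sets_eq_imp_space_eq[OF se] by simp
  have ms: "\<And>B. B \<in> sets borel \<Longrightarrow> B \<in> sets \<mu>" using se by simp
  have Xm[measurable]: "T_at T \<in> borel_measurable borel" by (rule T_at_meas[OF pT])
  have T0: "T 0 = 0" by (rule pay_props(1)[OF pT])
  have Tnn: "\<And>t. t \<ge> 0 \<Longrightarrow> T t \<ge> 0" by (rule pay_props(2)[OF pT])
  have Tmono: "\<And>s t. 0 \<le> s \<Longrightarrow> s \<le> t \<Longrightarrow> T s \<le> T t" by (rule pay_props(3)[OF pT])
  have finm: "{x::ennreal. x < \<infinity>} \<in> sets borel" by measurable

  define pinf where "pinf = measure \<mu> {\<infinity>}"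
  have cpl: "space \<mu> - {x. x < \<infinity>} = {\<infinity>}" unfolding sp by (auto simp: top.not_eq_extremum)
  have "prob (space \<mu> - {x. x<\<infinity>}) = 1 - prob {x. x<\<infinity>}" by (rule prob_compl[OF ms[OF finm]])
  then have "pinf = 1 - measure \<mu> {x. x < \<infinity>}" unfolding pinf_def cpl .
  then have pinf: "pinf > 0" using fin by simp
  have opm: "\<And>s. {ennreal s<..} \<in> sets \<mu>" by (rule ms) simp
  have pos: "\<And>s. pinf \<le> measure \<mu> {ennreal s<..}"
    unfolding pinf_def by (rule finite_measure_mono[OF _ opm]) simp
  have posp: "\<And>s. measure \<mu> {ennreal s<..} > 0" using pos pinf by (meson less_le_trans)

  define G where "G y = measure \<mu> {x. T_at T x > ennreal y}" for y
  have Gm[measurable]: "(\<lambda>y. ennreal (G y)) \<in> borel_measurable borel"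
  proof (rule antimono_ennreal_meas)
    fix y y' :: real assume "y \<le> y'"
    then have "{x. T_at T x > ennreal y'} \<subseteq> {x. T_at T x > ennreal y}"
      by (auto intro: le_less_trans[OF ennreal_leI])
    moreover have "{x. T_at T x > ennreal y} \<in> sets \<mu>" by (rule ms) measurable
    ultimately show "G y' \<le> G y" unfolding G_def by (rule finite_measure_mono)
  qed
  have rev_eq: "revenue \<mu> T = (\<integral>\<^sup>+ y\<in>{0..}. ennreal (G y) \<partial>lborel)"
    unfolding revenue_def G_def by (simp add: emeasure_eq_measure)
  obtain c where c: "c > 0" "\<And>p. 0 \<le> p \<Longrightarrow> p \<le> 1 \<Longrightarrow> c * p \<le> wm p"
    using weighting_props(6)[OF wmw] by blast
  define p0 where "p0 = measure \<mu> {ennreal 0<..}"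
  have p0: "p0 > 0" using posp unfolding p0_def by blast
  define W0 where "W0 y = ennreal (wm (cond_prob \<mu> {x. T_at T x - ennreal (T 0) > ennreal y} 0))" for y
  have W0m[measurable]: "W0 \<in> borel_measurable borel"
    unfolding W0_def[abs_def] by (rule W_meas[OF fm se Xm posp wmw])
  have D0: "ennreal lam * (\<integral>\<^sup>+ y\<in>{0..}. W0 y \<partial>lborel) \<le> ennreal (\<theta> * wp (cond_prob \<mu> {x. x < \<infinity>} 0))"
    unfolding W0_def by (rule D[OF order_refl posp])
  have G_le: "ennreal (G y) \<le> ennreal (p0 / c) * W0 y" for y
  proof -
    have TT0: "T_at T 0 = 0" using T0 by (simp add: T_at_def)
    have set_eq: "{x. T_at T x - ennreal (T 0) > ennreal y} \<inter> {ennreal 0<..} = {x. T_at T x > ennreal y}"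
      using TT0 T0 by (auto simp: zero_less_iff_neq_zero)
    have cp: "cond_prob \<mu> {x. T_at T x - ennreal (T 0) > ennreal y} 0 = G y / p0"
      unfolding cond_prob_def set_eq G_def p0_def ..
    have r: "0 \<le> G y / p0 \<and> G y / p0 \<le> 1"
      using cp_range[OF fm se posp, of "{x. T_at T x - ennreal (T 0) > ennreal y}" 0] cp by simp
    have "c * (G y / p0) \<le> wm (G y / p0)" using c r by blast
    then have "G y \<le> p0 / c * wm (G y / p0)" using c p0 by (simp add: field_simps)
    then have "ennreal (G y) \<le> ennreal (p0 / c * wm (G y / p0))" by (rule ennreal_leI)
    also have "\<dots> = ennreal (p0/c) * ennreal (wm (G y / p0))" by (rule ennreal_mult') (use c p0 in simp)
    finally show ?thesis unfolding W0_def cp .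
  qed
  have I0fin: "(\<integral>\<^sup>+ y\<in>{0..}. W0 y \<partial>lborel) < \<infinity>"
  proof -
    have "ennreal lam * (\<integral>\<^sup>+ y\<in>{0..}. W0 y \<partial>lborel) < \<infinity>" using D0 by (rule le_less_trans) simp
    then show ?thesis using la by (auto simp: ennreal_mult_less_top)
  qed
  have Rfin: "revenue \<mu> T < \<infinity>"
  proof -
    have "revenue \<mu> T \<le> (\<integral>\<^sup>+ y. ennreal (p0/c) * (W0 y * indicator {0..} y) \<partial>lborel)"
      unfolding rev_eq by (rule nn_integral_mono) (auto simp: G_le indicator_def)
    also have "\<dots> = ennreal (p0/c) * (\<integral>\<^sup>+ y\<in>{0..}. W0 y \<partial>lborel)"
      by (rule nn_integral_cmult) measurable
    also have "\<dots> < \<infinity>" using I0fin by (simp add: ennreal_mult_less_top)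
    finally show ?thesis .
  qed

  define S where "S = T_at T \<infinity>"
  have S_fin: "S < \<infinity>"
  proof (rule ccontr)
    assume "\<not> S < \<infinity>"
    then have Sinf: "T_at T \<infinity> = \<infinity>" unfolding S_def infinity_ennreal_def using top.not_eq_extremum by blast
    have pw: "ennreal pinf * indicator {0..} y \<le> ennreal (G y) * indicator {0..} y" for y
    proof -
      have "{\<infinity>} \<subseteq> {x. T_at T x > ennreal y}" using Sinf by simp
      then have "pinf \<le> G y" unfolding pinf_def G_def by (rule finite_measure_mono) (rule ms, measurable)
      then show ?thesis by (auto simp: indicator_def ennreal_leI)
    qed
    have "(\<integral>\<^sup>+ y. ennreal pinf * indicator {0..} (y::real) \<partial>lborel) \<le> revenue \<mu> T"
      unfolding rev_eq by (intro nn_integral_mono pw)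
    moreover have "(\<integral>\<^sup>+ y. ennreal pinf * indicator {0..} (y::real) \<partial>lborel) = \<infinity>"
      using pinf by (simp add: nn_integral_cmult_indicator lborel_Ici_inf)
    ultimately show False using Rfin by simp
  qed
  define Sr where "Sr = enn2real S"
  have SSr: "S = ennreal Sr" using S_fin by (simp add: Sr_def)
  have Sr0: "Sr \<ge> 0" by (simp add: Sr_def)
  have Xle: "T_at T x \<le> ennreal Sr" for x
  proof -
    have "T_at T x \<le> S" unfolding S_def by (rule T_at_le_sup)
    then show ?thesis using SSr by simp
  qed

  define q0 where "q0 = cond_prob \<mu> {x. x < \<infinity>} 0"
  have q0a: "0 \<le> q0" using cp_range[OF fm se posp, of "{x. x < \<infinity>}" 0] q0_def by simp
  have q0b: "q0 < 1"
  proof -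
    have "measure \<mu> ({x. x < \<infinity>} \<inter> {ennreal 0<..}) + pinf = measure \<mu> (({x. x < \<infinity>} \<inter> {ennreal 0<..}) \<union> {\<infinity>})"
      unfolding pinf_def by (rule finite_measure_Union[symmetric]) (auto intro!: ms simp: finm)
    also have "\<dots> \<le> p0" unfolding p0_def by (rule finite_measure_mono) (auto intro!: ms)
    finally have "measure \<mu> ({x. x < \<infinity>} \<inter> {ennreal 0<..}) < p0" using pinf by linarith
    then show "q0 < 1" unfolding q0_def cond_prob_def p0_def[symmetric] using p0 by simp
  qed
  have wq0: "wp q0 < 1" using weighting_props(2)[OF wpw, of q0 1] weighting_props(5)[OF wpw] q0a q0b by simp
  have wq0': "0 \<le> wp q0" using weighting_props(3)[OF wpw, of q0] q0a q0b by simp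
  define \<epsilon> where "\<epsilon> = \<theta> * (1 - wp q0) / lam"
  have \<epsilon>: "\<epsilon> > 0" using th la wq0 by (simp add: \<epsilon>_def)
  have l\<epsilon>: "lam * \<epsilon> = \<theta> * (1 - wp q0)" using la by (simp add: \<epsilon>_def)
  obtain m where m1: "m \<ge> 1" and mT: "Sr < T m + \<epsilon>"
  proof (cases "Sr < \<epsilon>")
    case True then show ?thesis using that[of 1] Tnn[of 1] by simp
  next
    case False
    then have "ennreal (Sr - \<epsilon>) < S" using \<epsilon> SSr by (simp add: ennreal_lessI)
    then obtain t where t: "t \<ge> 0" "ennreal (Sr - \<epsilon>) < ennreal (T t)"
      unfolding S_def T_at_def by (auto simp: less_SUP_iff)
    then have "Sr - \<epsilon> < T t" using False by (subst (asm) ennreal_less_iff) auto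
    moreover have "T t \<le> T (max t 1)" using t by (intro Tmono) auto
    ultimately show ?thesis using that[of "max t 1"] by simp
  qed
  define M where "M = ennreal m"
  define g where "g x = min x M" for x
  define \<mu>' where "\<mu>' = distr \<mu> borel g"
  define T' where "T' t = T t + (if 0 < t then \<epsilon> else 0)" for t
  have gm[measurable]: "g \<in> borel_measurable borel" unfolding g_def[abs_def] by measurable
  have gm\<mu>: "g \<in> measurable \<mu> borel" using measurable_cong_sets[OF se refl] gm by blast
  have pT': "payment_fn T'" unfolding T'_def[abs_def] by (rule pay_shift[OF pT]) (use \<epsilon> in simp)
  have sl': "stopping_law \<mu>'" unfolding \<mu>'_def g_def[abs_def] M_def
    by (rule stop_trunc[OF sl]) (use m1 in simp)
  have X'm[measurable]: "T_at T' \<in> borel_measurable borel" by (rule T_at_meas[OF pT'])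
  have mdist: "measure \<mu>' B = measure \<mu> (g -` B)" if "B \<in> sets borel" for B
    unfolding \<mu>'_def using measure_distr[OF gm\<mu> that] sp by simp
  have edist: "emeasure \<mu>' B = emeasure \<mu> (g -` B)" if "B \<in> sets borel" for B
    unfolding \<mu>'_def using emeasure_distr[OF gm\<mu> that] sp by simp
  have T'0: "T' 0 = 0" using T0 by (simp add: T'_def)
  have m0: "m > 0" using m1 by simp
  have gfin: "g x < \<infinity>" for x
  proof -
    have "g x \<le> M" unfolding g_def by simp
    also have "M < \<infinity>" unfolding M_def by simp
    finally show ?thesis .
  qed
  define r where "r x = enn2real (g x)" for x
  have gr: "g x = ennreal (r x)" for x using gfin[of x] by (simp add: r_def)
  have r0: "r x \<ge> 0" for x by (simp add: r_def)
  have gne: "g x \<noteq> \<infinity>" for x using gfin[of x] by auto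
  have X'g: "T_at T' (g x) = ennreal (T' (r x))" for x
    unfolding T_at_def using gne[of x] by (simp add: r_def)
  have rT: "ennreal (T (r x)) \<le> T_at T x" for x
  proof (cases "x = \<infinity>")
    case True
    then show ?thesis using r0[of x] by (auto simp: T_at_def intro!: SUP_upper)
  next
    case False
    then have xf: "x < \<infinity>" unfolding infinity_ennreal_def using top.not_eq_extremum by blast
    have "r x \<le> enn2real x" unfolding r_def g_def by (rule enn2real_mono) (use xf in auto)
    then have "T (r x) \<le> T (enn2real x)" using r0[of x] by (intro Tmono) auto
    then show ?thesis using False by (simp add: T_at_def ennreal_leI)
  qed
  have rs: "s < r x" if "ennreal s < x" "s \<ge> 0" "s < m" for s x
  proof -
    have "ennreal s < M" unfolding M_def using that m0 by (simp add: ennreal_lessI)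
    then have "ennreal s < g x" unfolding g_def using that(1) by simp
    then have "ennreal s < ennreal (r x)" using gr by simp
    then show ?thesis using that(2) by (simp add: ennreal_less_iff)
  qed
  have fm': "finite_measure \<mu>'" using sl' unfolding stopping_law_def prob_space_def by blast
  have se': "sets \<mu>' = sets borel" unfolding \<mu>'_def by simp

  have DIR': "DIR_compatible \<theta> lam wp wm \<mu>' T'"
    unfolding DIR_compatible_def
  proof (intro conjI allI impI sl' pT')
    fix s :: real assume s0: "0 \<le> s" and pos': "measure \<mu>' {ennreal s<..} > 0"
    have sm: "s < m"
    proof (rule ccontr)
      assume "\<not> s < m"
      then have "M \<le> ennreal s" unfolding M_def by (intro ennreal_leI) simp
      then have gle: "g x \<le> ennreal s" for x unfolding g_def by (meson min.coboundedI2)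
      have "\<not> ennreal s < g x" for x using gle[of x] leD by blast
      then have "g -` {ennreal s<..} = {}" by auto
      then show False using pos' mdist[of "{ennreal s<..}"] by simp
    qed
    have pre: "g -` {ennreal s<..} = {ennreal s<..}"
    proof -
      have "ennreal s < M" unfolding M_def using sm m0 s0 by (simp add: ennreal_lessI)
      then show ?thesis unfolding g_def by auto
    qed
    have ps': "measure \<mu>' {ennreal s<..} = measure \<mu> {ennreal s<..}" using mdist[of "{ennreal s<..}"] pre by simp
    have q1: "cond_prob \<mu>' {x. x < \<infinity>} s = 1"
    proof -
      have "g -` ({x. x < \<infinity>} \<inter> {ennreal s<..}) = {ennreal s<..}" using pre gfin by auto
      moreover have "{x. x < \<infinity>} \<inter> {ennreal s<..} \<in> sets borel" using finm by simp
      ultimately have "measure \<mu>' ({x. x < \<infinity>} \<inter> {ennreal s<..}) = measure \<mu> {ennreal s<..}"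
        using mdist by simp
      then show ?thesis unfolding cond_prob_def using ps' posp[of s] by simp
    qed
    define W' where "W' y = ennreal (wm (cond_prob \<mu>' {x. T_at T' x - ennreal (T' s) > ennreal y} s))" for y
    define W where "W y = ennreal (wm (cond_prob \<mu> {x. T_at T x - ennreal (T s) > ennreal y} s))" for y
    have Wm[measurable]: "W \<in> borel_measurable borel"
      unfolding W_def[abs_def] by (rule W_meas[OF fm se Xm posp wmw])
    have Dold: "ennreal lam * (\<integral>\<^sup>+ y\<in>{0..}. W y \<partial>lborel) \<le> ennreal (\<theta> * wp (cond_prob \<mu> {x. x < \<infinity>} s))"
      unfolding W_def by (rule D[OF s0 posp])
    have qs: "0 \<le> cond_prob \<mu> {x. x<\<infinity>} s \<and> cond_prob \<mu> {x. x<\<infinity>} s \<le> 1"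
      by (rule cp_range[OF fm se posp])
    have wqs: "wp (cond_prob \<mu> {x. x < \<infinity>} s) \<le> 1" using weighting_props(3)[OF wpw] qs by blast
    have cmp: "W' y \<le> W z" if z0: "0 \<le> z" and
      H: "\<And>x. ennreal s < x \<Longrightarrow> ennreal y < ennreal (T' (r x)) - ennreal (T' s) \<Longrightarrow> ennreal z < T_at T x - ennreal (T s)"
      for y z
    proof -
      have E'm: "{x. T_at T' x - ennreal (T' s) > ennreal y} \<inter> {ennreal s<..} \<in> sets borel" by measurable
      have Em: "{x. T_at T x - ennreal (T s) > ennreal z} \<inter> {ennreal s<..} \<in> sets borel" by measurable
      have "g -` ({x. T_at T' x - ennreal (T' s) > ennreal y} \<inter> {ennreal s<..})
          \<subseteq> {x. T_at T x - ennreal (T s) > ennreal z} \<inter> {ennreal s<..}"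
      proof
        fix x assume "x \<in> g -` ({x. T_at T' x - ennreal (T' s) > ennreal y} \<inter> {ennreal s<..})"
        then have h1: "ennreal y < T_at T' (g x) - ennreal (T' s)" and h2: "g x \<in> {ennreal s<..}" by auto
        have xs: "ennreal s < x" using h2 pre by blast
        show "x \<in> {x. T_at T x - ennreal (T s) > ennreal z} \<inter> {ennreal s<..}"
          using H[OF xs] h1 xs X'g by simp
      qed
      then have "measure \<mu> (g -` ({x. T_at T' x - ennreal (T' s) > ennreal y} \<inter> {ennreal s<..}))
          \<le> measure \<mu> ({x. T_at T x - ennreal (T s) > ennreal z} \<inter> {ennreal s<..})"
        by (rule finite_measure_mono) (rule ms[OF Em])
      then have cpl: "cond_prob \<mu>' {x. T_at T' x - ennreal (T' s) > ennreal y} s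
          \<le> cond_prob \<mu> {x. T_at T x - ennreal (T s) > ennreal z} s"
        unfolding cond_prob_def ps' mdist[OF E'm] by (simp add: divide_right_mono)
      have "0 \<le> cond_prob \<mu>' {x. T_at T' x - ennreal (T' s) > ennreal y} s"
        using cp_range[OF fm' se' pos'] by blast
      moreover have "cond_prob \<mu> {x. T_at T x - ennreal (T s) > ennreal z} s \<le> 1"
        using cp_range[OF fm se posp] by blast
      ultimately have "wm (cond_prob \<mu>' {x. T_at T' x - ennreal (T' s) > ennreal y} s)
          \<le> wm (cond_prob \<mu> {x. T_at T x - ennreal (T s) > ennreal z} s)"
        using cpl weighting_props(1)[OF wmw] by blast
      then show ?thesis unfolding W'_def W_def by (rule ennreal_leI)
    qed
    have main: "ennreal lam * (\<integral>\<^sup>+ y\<in>{0..}. W' y \<partial>lborel) \<le> ennreal \<theta>"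
    proof (cases "s = 0")
      case False
      then have spos: "s > 0" using s0 by simp
      have Ts0: "T s \<ge> 0" using Tnn s0 by blast
      have WW: "W' y \<le> W y" if y0: "y \<ge> 0" for y
      proof (rule cmp[OF y0])
        fix x assume xs: "ennreal s < x" and h: "ennreal y < ennreal (T' (r x)) - ennreal (T' s)"
        have rx: "s < r x" using rs[OF xs s0 sm] .
        have T's: "T' s = T s + \<epsilon>" and T'r: "T' (r x) = T (r x) + \<epsilon>" using spos rx by (simp_all add: T'_def)
        have "T' s \<ge> 0" using Ts0 \<epsilon> T's by simp
        then have "ennreal (y + T' s) < ennreal (T' (r x))" by (rule ennr_diff_gt2[OF _ y0 h])
        then have "y + T' s < T' (r x)" using y0 \<open>T' s \<ge> 0\<close> by (subst (asm) ennreal_less_iff) auto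
        then have lt: "y + T s < T (r x)" using T's T'r by simp
        then have "ennreal (y + T s) < ennreal (T (r x))" using y0 Ts0 by (intro ennreal_lessI) auto
        also have "\<dots> \<le> T_at T x" by (rule rT)
        finally show "ennreal y < T_at T x - ennreal (T s)" by (rule ennr_diff_gt1[OF Ts0 y0])
      qed
      have "(\<integral>\<^sup>+ y\<in>{0..}. W' y \<partial>lborel) \<le> (\<integral>\<^sup>+ y\<in>{0..}. W y \<partial>lborel)"
        by (intro nn_integral_mono) (auto simp: indicator_def WW)
      then have "ennreal lam * (\<integral>\<^sup>+ y\<in>{0..}. W' y \<partial>lborel) \<le> ennreal lam * (\<integral>\<^sup>+ y\<in>{0..}. W y \<partial>lborel)"
        by (rule mult_left_mono) simp
      also have "\<dots> \<le> ennreal (\<theta> * wp (cond_prob \<mu> {x. x < \<infinity>} s))" by (rule Dold)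
      also have "\<dots> \<le> ennreal \<theta>"
      proof (rule ennreal_leI)
        show "\<theta> * wp (cond_prob \<mu> {x. x < \<infinity>} s) \<le> \<theta>"
          using mult_left_mono[OF wqs, of \<theta>] th by simp
      qed
      finally show ?thesis .
    next
      case True
      have T's: "T' s = 0" using True T'0 by simp
      have Ts: "T s = 0" using True T0 by simp
      have Wle: "W' y * indicator {0..} y \<le> indicator {0..<\<epsilon>} y + W (y - \<epsilon>) * indicator {\<epsilon>..} y" for y
      proof (cases "y < \<epsilon>")
        case True
        have "0 \<le> cond_prob \<mu>' {x. T_at T' x - ennreal (T' s) > ennreal y} s \<and> cond_prob \<mu>' {x. T_at T' x - ennreal (T' s) > ennreal y} s \<le> 1"
          by (rule cp_range[OF fm' se' pos'])
        then have "wm (cond_prob \<mu>' {x. T_at T' x - ennreal (T' s) > ennreal y} s) \<le> 1"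
          using weighting_props(3)[OF wmw] by blast
        then have "W' y \<le> 1" unfolding W'_def by (metis ennreal_1 ennreal_leI)
        then show ?thesis using True by (auto simp: indicator_def)
      next
        case False
        then have y\<epsilon>: "y \<ge> \<epsilon>" by simp
        have "W' y \<le> W (y - \<epsilon>)"
        proof (rule cmp)
          show "0 \<le> y - \<epsilon>" using y\<epsilon> by simp
          fix x assume xs: "ennreal s < x" and h: "ennreal y < ennreal (T' (r x)) - ennreal (T' s)"
          have rx: "0 < r x" using rs[OF xs s0 sm] True by simp
          have T'r: "T' (r x) = T (r x) + \<epsilon>" using rx by (simp add: T'_def)
          have "ennreal y < ennreal (T' (r x))" using h T's by simp
          then have "y < T' (r x)" using y\<epsilon> \<epsilon> by (subst (asm) ennreal_less_iff) auto
          then have "(y - \<epsilon>) + T s < T (r x)" using T'r Ts by simp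
          then have "ennreal ((y - \<epsilon>) + T s) < ennreal (T (r x))" using y\<epsilon> Ts by (intro ennreal_lessI) auto
          also have "\<dots> \<le> T_at T x" by (rule rT)
          finally have "ennreal ((y - \<epsilon>) + T s) < T_at T x" .
          then show "ennreal (y - \<epsilon>) < T_at T x - ennreal (T s)"
            using ennr_diff_gt1[of "T s" "y - \<epsilon>" "T_at T x"] y\<epsilon> Ts by simp
        qed
        then show ?thesis using y\<epsilon> \<epsilon> by (auto simp: indicator_def)
      qed
      have Vm: "(\<lambda>y. W (y - \<epsilon>) * indicator {\<epsilon>..} y) \<in> borel_measurable borel" by measurable
      have "(\<integral>\<^sup>+ y\<in>{0..}. W' y \<partial>lborel) \<le> (\<integral>\<^sup>+ y. indicator {0..<\<epsilon>} y + W (y - \<epsilon>) * indicator {\<epsilon>..} y \<partial>lborel)"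
        by (intro nn_integral_mono Wle)
      also have "\<dots> = (\<integral>\<^sup>+ y. indicator {0..<\<epsilon>} y \<partial>lborel) + (\<integral>\<^sup>+ y. W (y - \<epsilon>) * indicator {\<epsilon>..} y \<partial>lborel)"
        by (rule nn_integral_add) (use Vm in auto)
      also have "(\<integral>\<^sup>+ y. indicator {0..<\<epsilon>} y \<partial>lborel) = ennreal \<epsilon>" using \<epsilon> by simp
      also have "(\<integral>\<^sup>+ y. W (y - \<epsilon>) * indicator {\<epsilon>..} y \<partial>lborel) = (\<integral>\<^sup>+ y\<in>{0..}. W y \<partial>lborel)"
        using nn_integral_real_affine[OF Vm, of 1 \<epsilon>] by (simp add: indicator_def)
      finally have I: "(\<integral>\<^sup>+ y\<in>{0..}. W' y \<partial>lborel) \<le> ennreal \<epsilon> + (\<integral>\<^sup>+ y\<in>{0..}. W y \<partial>lborel)" .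
      have "ennreal lam * (\<integral>\<^sup>+ y\<in>{0..}. W' y \<partial>lborel) \<le> ennreal lam * (ennreal \<epsilon> + (\<integral>\<^sup>+ y\<in>{0..}. W y \<partial>lborel))"
        by (rule mult_left_mono[OF I]) simp
      also have "\<dots> = ennreal (lam * \<epsilon>) + ennreal lam * (\<integral>\<^sup>+ y\<in>{0..}. W y \<partial>lborel)"
        using la \<epsilon> by (simp add: distrib_left ennreal_mult)
      also have "\<dots> \<le> ennreal (\<theta> * (1 - wp q0)) + ennreal (\<theta> * wp q0)"
        using Dold True unfolding l\<epsilon> q0_def by (intro add_left_mono) simp
      also have "\<dots> = ennreal \<theta>"
        using th wq0 wq0' by (simp add: ennreal_plus[symmetric] algebra_simps del: ennreal_plus)
      finally show ?thesis .
    qed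
    show "ennreal lam * (\<integral>\<^sup>+ y\<in>{0..}. ennreal (wm (cond_prob \<mu>' {x. T_at T' x - ennreal (T' s) > ennreal y} s)) \<partial>lborel)
        \<le> ennreal (\<theta> * wp (cond_prob \<mu>' {x. x < \<infinity>} s))"
      using main unfolding q1 W'_def using weighting_props(5)[OF wpw] by simp
  qed
  have X'ge: "T_at T x \<le> T_at T' (g x)" for x
  proof (cases "x = 0")
    case True
    then have "g x = 0" unfolding g_def by simp
    then have "r x = 0" unfolding r_def by simp
    then show ?thesis using True X'g[of x] T'0 T0 by (simp add: T_at_def)
  next
    case False
    then have "ennreal 0 < x" by (simp add: zero_less_iff_neq_zero)
    then have rx: "0 < r x" using rs[of 0 x] m0 by simp
    have X'x: "T_at T' (g x) = ennreal (T (r x) + \<epsilon>)" using X'g[of x] rx by (simp add: T'_def)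
    show ?thesis
    proof (cases "x \<le> M")
      case True
      then have "g x = x" unfolding g_def by simp
      then have xr: "x = ennreal (r x)" using gr[of x] by simp
      have xne: "x \<noteq> \<infinity>" using xr by (metis ennreal_neq_top infinity_ennreal_def)
      have e2: "enn2real x = r x" using xr r0[of x] by (metis enn2real_ennreal)
      have "T_at T x = ennreal (T (r x))" using xne e2 by (simp add: T_at_def)
      also have "\<dots> \<le> ennreal (T (r x) + \<epsilon>)" using \<epsilon> by (intro ennreal_leI) simp
      finally show ?thesis using X'x by simp
    next
      case False
      then have "g x = M" unfolding g_def by simp
      then have "r x = m" unfolding r_def M_def using m0 by simp
      then have "T_at T' (g x) = ennreal (T m + \<epsilon>)" using X'x by simp
      moreover have "T_at T x \<le> ennreal (T m + \<epsilon>)"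
        using Xle[of x] mT by (meson ennreal_leI less_imp_le order_trans)
      ultimately show ?thesis by simp
    qed
  qed
  have Xinf: "T_at T' (g \<infinity>) = ennreal (T m + \<epsilon>)"
  proof -
    have "g \<infinity> = M" unfolding g_def by simp
    then have "r \<infinity> = m" unfolding r_def M_def using m0 by simp
    then show ?thesis using X'g[of \<infinity>] m0 by (simp add: T'_def)
  qed
  define \<delta> where "\<delta> = T m + \<epsilon> - Sr"
  have \<delta>: "\<delta> > 0" using mT by (simp add: \<delta>_def)
  have pre_m: "g -` {x. T_at T' x > ennreal y} \<in> sets \<mu>" for y
  proof -
    have "g -` {x. T_at T' x > ennreal y} \<inter> space \<mu> \<in> sets \<mu>" by (rule measurable_sets[OF gm\<mu>]) measurable
    then show ?thesis using sp by simp
  qed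
  have Em: "{x. T_at T x > ennreal y} \<in> sets \<mu>" for y by (rule ms) measurable
  have pw: "ennreal (G y) * indicator {0..} y + ennreal pinf * indicator {Sr..<T m + \<epsilon>} y
      \<le> emeasure \<mu> (g -` {x. T_at T' x > ennreal y}) * indicator {0..} y" for y
  proof (cases "y \<in> {Sr..<T m + \<epsilon>}")
    case True
    then have y0: "y \<ge> 0" using Sr0 by simp
    have "{x. T_at T x > ennreal y} = {}"
    proof -
      have "T_at T x \<le> ennreal y" for x using Xle[of x] True by (meson atLeastLessThan_iff ennreal_leI order_trans)
      then show ?thesis using leD by blast
    qed
    then have G0: "G y = 0" unfolding G_def by simp
    have "{\<infinity>} \<subseteq> g -` {x. T_at T' x > ennreal y}"
      using Xinf True Sr0 by (auto intro!: ennreal_lessI)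
    then have "emeasure \<mu> {\<infinity>} \<le> emeasure \<mu> (g -` {x. T_at T' x > ennreal y})"
      by (rule emeasure_mono) (rule pre_m)
    then have "ennreal pinf \<le> emeasure \<mu> (g -` {x. T_at T' x > ennreal y})"
      unfolding pinf_def by (simp add: emeasure_eq_measure)
    then show ?thesis using True y0 G0 by (simp add: indicator_def)
  next
    case False
    have "{x. T_at T x > ennreal y} \<subseteq> g -` {x. T_at T' x > ennreal y}"
      using X'ge by (auto intro: less_le_trans)
    then have "emeasure \<mu> {x. T_at T x > ennreal y} \<le> emeasure \<mu> (g -` {x. T_at T' x > ennreal y})"
      by (rule emeasure_mono) (rule pre_m)
    then have "ennreal (G y) \<le> emeasure \<mu> (g -` {x. T_at T' x > ennreal y})"
      unfolding G_def by (simp add: emeasure_eq_measure)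
    then show ?thesis using False by (auto simp: indicator_def)
  qed
  have rev': "revenue \<mu>' T' = (\<integral>\<^sup>+ y\<in>{0..}. emeasure \<mu> (g -` {x. T_at T' x > ennreal y}) \<partial>lborel)"
  proof -
    have "emeasure \<mu>' {x. T_at T' x > ennreal y} = emeasure \<mu> (g -` {x. T_at T' x > ennreal y})" for y
      by (rule edist) measurable
    then show ?thesis unfolding revenue_def by simp
  qed
  have "revenue \<mu> T + ennreal pinf * ennreal \<delta>
      = (\<integral>\<^sup>+ y. ennreal (G y) * indicator {0..} y + ennreal pinf * indicator {Sr..<T m + \<epsilon>} y \<partial>lborel)"
  proof -
    have "(\<integral>\<^sup>+ y. ennreal (G y) * indicator {0..} y + ennreal pinf * indicator {Sr..<T m + \<epsilon>} y \<partial>lborel)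
        = (\<integral>\<^sup>+ y. ennreal (G y) * indicator {0..} y \<partial>lborel) + (\<integral>\<^sup>+ y. ennreal pinf * indicator {Sr..<T m + \<epsilon>} y \<partial>lborel)"
      by (rule nn_integral_add) measurable
    also have "(\<integral>\<^sup>+ y. ennreal pinf * indicator {Sr..<T m + \<epsilon>} y \<partial>lborel) = ennreal pinf * ennreal \<delta>"
      using mT by (simp add: nn_integral_cmult_indicator \<delta>_def)
    finally show ?thesis unfolding rev_eq by simp
  qed
  also have "\<dots> \<le> revenue \<mu>' T'" unfolding rev' by (intro nn_integral_mono pw)
  finally have ge: "revenue \<mu> T + ennreal pinf * ennreal \<delta> \<le> revenue \<mu>' T'" .
  obtain R where R: "revenue \<mu> T = ennreal R" "R \<ge> 0" using Rfin
    by (metis ennreal_cases infinity_ennreal_def less_irrefl)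
  have "revenue \<mu> T < revenue \<mu> T + ennreal pinf * ennreal \<delta>"
  proof -
    have pd: "0 < pinf * \<delta>" using pinf \<delta> by simp
    have "ennreal R < ennreal (R + pinf * \<delta>)" by (rule ennreal_lessI) (use R(2) pd in linarith)+
    also have "\<dots> = ennreal R + ennreal pinf * ennreal \<delta>" using R pinf \<delta> by (simp add: ennreal_mult)
    finally show ?thesis using R by simp
  qed
  also note ge
  finally have "revenue \<mu> T < revenue \<mu>' T'" .
  moreover have "revenue \<mu>' T' \<le> revenue \<mu> T" using opt DIR' unfolding optimal_def by blast
  ultimately show False by simp
qed

end
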